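(* Let $P_X$ be a distribution on $\mathbb{B}^d:=\{x\in\mathbb{R}^d:\|x\|_2\le1\}$ such that there exist $c_0>0$ and a closed Euclidean ball $A\subseteq\mathbb{B}^d$ of radius $\tau>0$ with $P_X(A_0)\ge c_0\mathrm{Vol}_d(A_0)$ for all measurable $A_0\subseteq A$. Let $p\in[d]$, $U\in\mathbb{R}^{d\times p}$ with $U^\top U=I_p$, $X\sim P_X$, and let $Q$ denote the distribution of $(U^\top X+\mathbf{1}_p)/2$. Then there exist $c_0'\equiv c_0'(c_0,\tau,d,p)>0$ and a hypercube $A'\subseteq[0,1]^p$ of side length $\frac{\tau}{2\sqrt p}$ such that $Q(A_0')\ge c_0'\mathrm{Vol}_p(A_0')$ for all measurable $A_0'\subseteq A'$.
   Context: $\mathrm{Vol}_k$ denotes $k$-dimensional Lebesgue measure; $\mathbf{1}_p$ is the all-ones vector in $\mathbb{R}^p$. *)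

theory Defs
  imports "HOL-Probability.Probability"
begin

definition ones :: "real ^ 'p" where "ones = (\<chi> i. 1)"

end

theory Submission
  imports Defs
begin

lemma emeasure_lborel_Times:
  assumes "A \<in> sets borel" "B \<in> sets borel"
  shows "emeasure (lborel::('a::euclidean_space \<times> 'b::euclidean_space) measure) (A \<times> B)
       = emeasure lborel A * emeasure lborel B"
  by (subst lborel_prod[symmetric]) (rule sigma_finite_measure.emeasure_pair_measure_Times[OF sigma_finite_lborel]; simp add: assms)

lemma norm_le_comp:
  fixes x :: "real ^ 'n"
  assumes "\<And>i. \<bar>x $ i\<bar> \<le> s"
  shows "norm x \<le> sqrt (real CARD('n)) * s"
proof -
  have s: "s \<ge> 0" using assms[of undefined] by simp
  have "(\<Sum>i\<in>UNIV. (x $ i)\<^sup>2) \<le> (\<Sum>i\<in>(UNIV::'n set). s\<^sup>2)"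
    by (intro sum_mono) (metis abs_le_square_iff abs_of_nonneg assms s)
  then have "(\<Sum>i\<in>UNIV. (x $ i)\<^sup>2) \<le> real CARD('n) * s\<^sup>2" by simp
  then have "sqrt (\<Sum>i\<in>UNIV. (x $ i)\<^sup>2) \<le> sqrt (real CARD('n) * s\<^sup>2)"
    using real_sqrt_le_mono by blast
  also have "\<dots> = sqrt (real CARD('n)) * s" using s by (simp add: real_sqrt_mult)
  finally show ?thesis by (simp add: norm_vec_def L2_set_def)
qed

lemma UtU:
  fixes U :: "real^'p^'d"
  assumes "transpose U ** U = mat 1"
  shows "transpose U *v (U *v y) = y"
  by (metis matrix_vector_mul_assoc assms matrix_vector_mul_lid)

lemma inner_U:
  fixes U :: "real^'p^'d"
  shows "inner (U *v y) w = inner y (transpose U *v w)"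
  by (metis dot_lmul_matrix vector_transpose_matrix)

lemma orth_U:
  fixes U :: "real^'p^'d"
  assumes "transpose U ** U = mat 1"
  shows "inner (w - U *v (transpose U *v w)) (U *v c) = 0"
  by (simp del: transpose_matrix_vector add: inner_commute[of _ "U *v c"] inner_U[of U] UtU[OF assms] matrix_vector_mult_diff_distrib)

lemma norm_U:
  fixes U :: "real^'p^'d"
  assumes "transpose U ** U = mat 1"
  shows "norm (U *v y) = norm y"
proof -
  have "inner (U *v y) (U *v y) = inner y y" by (simp del: transpose_matrix_vector add: inner_U[of U] UtU[OF assms])
  then show ?thesis by (simp add: norm_eq_sqrt_inner)
qed

lemma pyth_U:
  fixes U :: "real^'p^'d"
  assumes "transpose U ** U = mat 1"
  shows "(norm w)\<^sup>2 = (norm (w - U *v (transpose U *v w)))\<^sup>2 + (norm (transpose U *v w))\<^sup>2"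
proof -
  have o: "orthogonal (w - U *v (transpose U *v w)) (U *v (transpose U *v w))"
    using orth_U[OF assms] by (simp add: orthogonal_def)
  have "w = (w - U *v (transpose U *v w)) + U *v (transpose U *v w)" by simp
  then have "(norm w)\<^sup>2 = (norm ((w - U *v (transpose U *v w)) + U *v (transpose U *v w)))\<^sup>2" by simp
  also have "\<dots> = (norm (w - U *v (transpose U *v w)))\<^sup>2 + (norm (U *v (transpose U *v w)))\<^sup>2"
    using norm_add_Pythagorean[OF o] .
  finally show ?thesis by (simp add: norm_U[OF assms])
qed

lemma scale_meas:
  fixes A :: "('a::euclidean_space) set"
  assumes A: "A \<in> sets borel"
  shows "emeasure lborel A = ennreal ((1/2)^DIM('a)) * emeasure lborel ((\<lambda>x. t + (1/2) *\<^sub>R x) -` A)"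
proof -
  have "emeasure lborel A = emeasure (density (distr lborel borel (\<lambda>x. t + (1/2::real) *\<^sub>R x)) (\<lambda>_. \<bar>1/2::real\<bar>^DIM('a))) A"
    using lborel_affine[of "1/2::real" t] by simp
  also have "\<dots> = ennreal ((1/2)^DIM('a)) * emeasure (distr lborel borel (\<lambda>x. t + (1/2::real) *\<^sub>R x)) A"
    using A by (subst emeasure_density_const) auto
  also have "\<dots> = ennreal ((1/2)^DIM('a)) * emeasure lborel ((\<lambda>x. t + (1/2) *\<^sub>R x) -` A)"
    using A by (subst emeasure_distr) auto
  finally show ?thesis .
qed

lemma lborel_transl:
  fixes c :: "'a::euclidean_space"
  assumes A: "A \<in> sets borel"
  shows "emeasure lborel ((\<lambda>x. x + c) -` A) = emeasure lborel A"
proof -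
  have e: "(\<lambda>x. x + c) = (+) c" by (auto simp: add.commute)
  have "emeasure lborel ((\<lambda>x. x + c) -` A) = emeasure lborel ((+) c -` A \<inter> space lborel)"
    by (simp add: e)
  also have "\<dots> = emeasure (distr lborel borel ((+) c)) A"
    using A by (subst emeasure_distr) auto
  also have "\<dots> = emeasure lborel A" by (simp add: lborel_distr_plus)
  finally show ?thesis .
qed

lemma shear1:
  fixes f :: "'b::euclidean_space \<Rightarrow> 'a::euclidean_space"
  assumes f: "f \<in> borel_measurable borel" and X: "X \<in> sets borel"
  shows "emeasure lborel ((\<lambda>p. (fst p + f (snd p), snd p)) -` X) = emeasure (lborel :: ('a\<times>'b) measure) X"
proof -
  have ps: "pair_sigma_finite (lborel::'a measure) (lborel::'b measure)"
    by (simp add: pair_sigma_finite_def sigma_finite_lborel)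
  have Xs: "X \<in> sets (lborel \<Otimes>\<^sub>M lborel)" using X by (subst lborel_prod) simp
  have m0: "(\<lambda>p. (fst p + f (snd p), snd p)) \<in> (borel \<Otimes>\<^sub>M borel) \<rightarrow>\<^sub>M (borel \<Otimes>\<^sub>M borel)" using f by measurable
  have m: "(\<lambda>p. (fst p + f (snd p), snd p)) \<in> borel \<rightarrow>\<^sub>M borel" using m0 by (simp only: borel_prod)
  have Ys: "(\<lambda>p. (fst p + f (snd p), snd p)) -` X \<in> sets (lborel \<Otimes>\<^sub>M lborel)"
    using measurable_sets[OF m X] by (subst lborel_prod) simp
  have sl: "(\<lambda>x. (x, y)) -` X \<in> sets borel" for y
    using measurable_sets[OF _ X, of "\<lambda>x. (x, y)" borel] by simp
  have "emeasure lborel ((\<lambda>p. (fst p + f (snd p), snd p)) -` X)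
     = (\<integral>\<^sup>+y. emeasure lborel ((\<lambda>x. (x, y)) -` ((\<lambda>p. (fst p + f (snd p), snd p)) -` X)) \<partial>lborel)"
    using pair_sigma_finite.emeasure_pair_measure_alt2[OF ps Ys] by (simp add: lborel_prod)
  also have "\<dots> = (\<integral>\<^sup>+y. emeasure lborel ((\<lambda>x. (x, y)) -` X) \<partial>lborel)"
  proof (rule nn_integral_cong)
    fix y :: 'b
    have "(\<lambda>x. (x, y)) -` ((\<lambda>p. (fst p + f (snd p), snd p)) -` X) = (\<lambda>x. x + f y) -` ((\<lambda>x. (x, y)) -` X)"
      by auto
    then show "emeasure lborel ((\<lambda>x. (x, y)) -` ((\<lambda>p. (fst p + f (snd p), snd p)) -` X)) = emeasure lborel ((\<lambda>x. (x, y)) -` X)"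
      using lborel_transl[OF sl] by simp
  qed
  also have "\<dots> = emeasure lborel X"
    using pair_sigma_finite.emeasure_pair_measure_alt2[OF ps Xs] by (simp add: lborel_prod)
  finally show ?thesis .
qed

lemma shear2:
  fixes g :: "'a::euclidean_space \<Rightarrow> 'b::euclidean_space"
  assumes g: "g \<in> borel_measurable borel" and X: "X \<in> sets borel"
  shows "emeasure lborel ((\<lambda>p. (fst p, snd p + g (fst p))) -` X) = emeasure (lborel :: ('a\<times>'b) measure) X"
proof -
  have ps: "pair_sigma_finite (lborel::'a measure) (lborel::'b measure)"
    by (simp add: pair_sigma_finite_def sigma_finite_lborel)
  have Xs: "X \<in> sets (lborel \<Otimes>\<^sub>M lborel)" using X by (subst lborel_prod) simp
  have m0: "(\<lambda>p. (fst p, snd p + g (fst p))) \<in> (borel \<Otimes>\<^sub>M borel) \<rightarrow>\<^sub>M (borel \<Otimes>\<^sub>M borel)" using g by measurable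
  have m: "(\<lambda>p. (fst p, snd p + g (fst p))) \<in> borel \<rightarrow>\<^sub>M borel" using m0 by (simp only: borel_prod)
  have Ys: "(\<lambda>p. (fst p, snd p + g (fst p))) -` X \<in> sets (lborel \<Otimes>\<^sub>M lborel)"
    using measurable_sets[OF m X] by (subst lborel_prod) simp
  have sl: "Pair x -` X \<in> sets borel" for x
    using measurable_sets[OF _ X, of "Pair x" borel] by simp
  have "emeasure lborel ((\<lambda>p. (fst p, snd p + g (fst p))) -` X)
     = (\<integral>\<^sup>+x. emeasure lborel (Pair x -` ((\<lambda>p. (fst p, snd p + g (fst p))) -` X)) \<partial>lborel)"
    using sigma_finite_measure.emeasure_pair_measure_alt[OF sigma_finite_lborel Ys] by (simp add: lborel_prod)
  also have "\<dots> = (\<integral>\<^sup>+x. emeasure lborel (Pair x -` X) \<partial>lborel)"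
  proof (rule nn_integral_cong)
    fix x :: 'a
    have "Pair x -` ((\<lambda>p. (fst p, snd p + g (fst p))) -` X) = (\<lambda>y. y + g x) -` (Pair x -` X)"
      by auto
    then show "emeasure lborel (Pair x -` ((\<lambda>p. (fst p, snd p + g (fst p))) -` X)) = emeasure lborel (Pair x -` X)"
      using lborel_transl[OF sl] by simp
  qed
  also have "\<dots> = emeasure lborel X"
    using sigma_finite_measure.emeasure_pair_measure_alt[OF sigma_finite_lborel Xs] by (simp add: lborel_prod)
  finally show ?thesis .
qed


lemma matrix_vector_mult_minus_distrib:
  fixes A :: "real^'n^'m"
  shows "A *v (- x) = - (A *v x)"
  using linear_neg[OF matrix_vector_mul_linear[of A]] by simp

lemma shear1_sets:
  fixes f :: "'b::euclidean_space \<Rightarrow> 'a::euclidean_space"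
  assumes f: "f \<in> borel_measurable borel" and X: "X \<in> sets (borel :: ('a \<times> 'b) measure)"
  shows "(\<lambda>p. (fst p + f (snd p), snd p)) -` X \<in> sets borel"
proof -
  have m0: "(\<lambda>p. (fst p + f (snd p), snd p)) \<in> (borel \<Otimes>\<^sub>M borel) \<rightarrow>\<^sub>M (borel \<Otimes>\<^sub>M borel)" using f by measurable
  have m: "(\<lambda>p. (fst p + f (snd p), snd p)) \<in> borel \<rightarrow>\<^sub>M borel" using m0 by (simp only: borel_prod)
  show ?thesis using measurable_sets[OF m X] by simp
qed

lemma shear2_sets:
  fixes g :: "'a::euclidean_space \<Rightarrow> 'b::euclidean_space"
  assumes g: "g \<in> borel_measurable borel" and X: "X \<in> sets (borel :: ('a \<times> 'b) measure)"
  shows "(\<lambda>p. (fst p, snd p + g (fst p))) -` X \<in> sets borel"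
proof -
  have m0: "(\<lambda>p. (fst p, snd p + g (fst p))) \<in> (borel \<Otimes>\<^sub>M borel) \<rightarrow>\<^sub>M (borel \<Otimes>\<^sub>M borel)" using g by measurable
  have m: "(\<lambda>p. (fst p, snd p + g (fst p))) \<in> borel \<rightarrow>\<^sub>M borel" using m0 by (simp only: borel_prod)
  show ?thesis using measurable_sets[OF m X] by simp
qed

lemma key_measure:
  fixes U :: "real^'p^'d" and z :: "real^'d" and B :: "(real^'p) set" and tau :: real
  assumes UU: "transpose U ** U = mat 1" and tau: "tau > 0"
    and B: "B \<in> sets borel" and Bsub: "\<And>y. y \<in> B \<Longrightarrow> norm (y - transpose U *v z) \<le> tau/2"
  shows "measure lborel (cball (0::real^'d) (tau/2)) * measure lborel B
      \<le> measure lborel (cball z tau \<inter> (\<lambda>x. transpose U *v x) -` B) * measure lborel (cball (0::real^'p) (tau/2))"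
proof -
  define V where "V = transpose U"
  have VU: "V *v (U *v y) = y" for y unfolding V_def by (rule UtU[OF UU])
  define u where "u = V *v z"
  define K where "K = cball (0::real^'d) (tau/2)"
  define C where "C = cball (0::real^'p) (tau/2)"
  define S where "S = cball z tau \<inter> (\<lambda>x. V *v x) -` B"
  define f1 where "f1 = (\<lambda>y. z + U *v y - U *v u)"
  define g2 where "g2 = (\<lambda>x. - (V *v x))"
  define f3 where "f3 = (\<lambda>y. U *v y)"
  have mf1: "f1 \<in> borel_measurable borel" unfolding f1_def
    by (intro borel_measurable_continuous_onI continuous_intros)
  have mg2: "g2 \<in> borel_measurable borel" unfolding g2_def
    by (intro borel_measurable_continuous_onI continuous_intros)
  have mf3: "f3 \<in> borel_measurable borel" unfolding f3_def
    by (intro borel_measurable_continuous_onI continuous_intros)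
  have mV: "(\<lambda>x. V *v x) \<in> borel_measurable borel"
    by (intro borel_measurable_continuous_onI continuous_intros)
  have Sb: "S \<in> sets borel" unfolding S_def
    using measurable_sets[OF mV B] by auto
  have Kb: "K \<in> sets borel" "C \<in> sets borel" unfolding K_def C_def by auto
  define T1 where "T1 = (\<lambda>p::(real^'d)\<times>(real^'p). (fst p + f1 (snd p), snd p))"
  define T2 where "T2 = (\<lambda>p::(real^'d)\<times>(real^'p). (fst p, snd p + g2 (fst p)))"
  define T3 where "T3 = (\<lambda>p::(real^'d)\<times>(real^'p). (fst p + f3 (snd p), snd p))"
  have SC: "S \<times> C \<in> sets borel" using Sb Kb by (simp add: borel_prod[symmetric])
  have X3: "T3 -` (S \<times> C) \<in> sets borel" unfolding T3_def by (rule shear1_sets[OF mf3 SC])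
  have X2: "T2 -` (T3 -` (S \<times> C)) \<in> sets borel" unfolding T2_def by (rule shear2_sets[OF mg2 X3])
  have X1: "T1 -` (T2 -` (T3 -` (S \<times> C))) \<in> sets borel" unfolding T1_def by (rule shear1_sets[OF mf1 X2])
  have incl: "K \<times> B \<subseteq> T1 -` (T2 -` (T3 -` (S \<times> C)))"
  proof clarify
    fix x y assume x: "x \<in> K" and y: "y \<in> B"
    have nx: "norm x \<le> tau/2" using x by (simp add: K_def)
    define x1 where "x1 = x + f1 y"
    define y2 where "y2 = y + g2 x1"
    define x3 where "x3 = x1 + f3 y2"
    have y2e: "y2 = - (V *v x)"
      unfolding y2_def g2_def x1_def f1_def u_def
      by (simp add: matrix_vector_right_distrib matrix_vector_mult_diff_distrib VU)
    have x3e: "V *v x3 = y"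
      unfolding x3_def y2e f3_def x1_def f1_def u_def
      by (simp add: matrix_vector_right_distrib matrix_vector_mult_diff_distrib VU matrix_vector_mult_minus_distrib)
    have x3z: "x3 - z = (x - U *v (V *v x)) + U *v (y - u)"
      unfolding x3_def y2e f3_def x1_def f1_def
      by (simp add: matrix_vector_right_distrib matrix_vector_mult_diff_distrib matrix_vector_mult_minus_distrib algebra_simps)
    have o: "orthogonal (x - U *v (V *v x)) (U *v (y - u))"
      using orth_U[OF UU, of x "y - u"] by (simp only: orthogonal_def V_def)
    have py: "(norm x)\<^sup>2 = (norm (x - U *v (V *v x)))\<^sup>2 + (norm (V *v x))\<^sup>2"
      using pyth_U[OF UU, of x] by (simp only: V_def)
    have nyu: "norm (y - u) \<le> tau/2" using Bsub[OF y] by (simp only: u_def V_def)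
    have "(norm (x3 - z))\<^sup>2 = (norm (x - U *v (V *v x)))\<^sup>2 + (norm (y - u))\<^sup>2"
      unfolding x3z using norm_add_Pythagorean[OF o] norm_U[OF UU] by simp
    also have "\<dots> \<le> (tau/2)\<^sup>2 + (tau/2)\<^sup>2"
    proof -
      have a: "(norm (x - U *v (V *v x)))\<^sup>2 \<le> (norm x)\<^sup>2" using py by simp
      have b: "(norm x)\<^sup>2 \<le> (tau/2)\<^sup>2" using nx by (simp add: power_mono)
      have c: "(norm (y - u))\<^sup>2 \<le> (tau/2)\<^sup>2" using nyu by (simp add: power_mono)
      show ?thesis using a b c by linarith
    qed
    also have "\<dots> \<le> tau\<^sup>2" by (simp add: power2_eq_square)
    finally have n2: "(norm (x3 - z))\<^sup>2 \<le> tau\<^sup>2" .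
    have "norm (x3 - z) \<le> tau" using power2_le_imp_le[OF n2] tau by simp
    then have x3S: "x3 \<in> S" unfolding S_def using x3e y by (simp add: dist_norm norm_minus_commute)
    have "(norm (V *v x))\<^sup>2 \<le> (norm x)\<^sup>2" using py by simp
    then have "norm (V *v x) \<le> norm x" using power2_le_imp_le norm_ge_zero by blast
    then have "norm y2 \<le> tau/2" unfolding y2e using nx by simp
    then have y2C: "y2 \<in> C" by (simp add: C_def)
    show "(x, y) \<in> T1 -` (T2 -` (T3 -` (S \<times> C)))"
      using x3S y2C unfolding T1_def T2_def T3_def x3_def y2_def x1_def by simp
  qed
  have "emeasure lborel K * emeasure lborel B = emeasure lborel (K \<times> B)"
    using Kb B by (simp add: emeasure_lborel_Times)
  also have "\<dots> \<le> emeasure lborel (T1 -` (T2 -` (T3 -` (S \<times> C))))"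
    by (rule emeasure_mono[OF incl]) (use X1 in simp)
  also have "\<dots> = emeasure lborel (T2 -` (T3 -` (S \<times> C)))"
    unfolding T1_def by (rule shear1[OF mf1 X2])
  also have "\<dots> = emeasure lborel (T3 -` (S \<times> C))"
    unfolding T2_def by (rule shear2[OF mg2 X3])
  also have "\<dots> = emeasure lborel (S \<times> C)"
    unfolding T3_def by (rule shear1[OF mf3 SC])
  also have "\<dots> = emeasure lborel S * emeasure lborel C"
    using Sb Kb by (simp add: emeasure_lborel_Times)
  finally have E: "emeasure lborel K * emeasure lborel B \<le> emeasure lborel S * emeasure lborel C" .
  have fin: "emeasure lborel K \<noteq> \<top>" "emeasure lborel C \<noteq> \<top>"
    unfolding K_def C_def using emeasure_lborel_cball_finite by (auto simp: less_top)
  have "B \<subseteq> cball u (tau/2)" using Bsub by (auto simp: u_def V_def dist_norm norm_minus_commute)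
  then have "emeasure lborel B \<le> emeasure lborel (cball u (tau/2))" by (rule emeasure_mono) simp
  then have finB: "emeasure lborel B \<noteq> \<top>"
    using emeasure_lborel_cball_finite[of u "tau/2"] by (simp add: less_top order.strict_trans1)
  have "S \<subseteq> cball z tau" by (simp add: S_def)
  then have "emeasure lborel S \<le> emeasure lborel (cball z tau)" by (rule emeasure_mono) simp
  then have finS: "emeasure lborel S \<noteq> \<top>"
    using emeasure_lborel_cball_finite[of z tau] by (simp add: less_top order.strict_trans1)
  have "ennreal (measure lborel K * measure lborel B) \<le> ennreal (measure lborel S * measure lborel C)"
    using E fin finB finS by (simp add: emeasure_eq_ennreal_measure ennreal_mult'')
  then have "measure lborel K * measure lborel B \<le> measure lborel S * measure lborel C"
    by (simp add: ennreal_le_iff)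
  then show ?thesis unfolding K_def C_def S_def V_def .
qed

theorem lemma17:
  fixes c0 tau :: real
  assumes "c0 > 0" and "tau > 0"
    and "CARD('p::finite) \<le> CARD('d::finite)"
  shows "\<exists>c0'>0. \<forall>(M :: (real ^ 'd) measure) (U :: real ^ 'p ^ 'd) (z :: real ^ 'd).
     (prob_space M \<and> sets M = sets borel \<and> measure M (cball 0 1) = 1
      \<and> cball z tau \<subseteq> cball 0 1
      \<and> (\<forall>A0 \<in> sets borel. A0 \<subseteq> cball z tau \<longrightarrow> measure M A0 \<ge> c0 * measure lborel A0)
      \<and> transpose U ** U = mat 1)
     \<longrightarrow> (\<exists>a :: real ^ 'p.
           cbox a (a + (tau / (2 * sqrt (real CARD('p)))) *\<^sub>R ones) \<subseteq> cbox 0 ones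
         \<and> (\<forall>A0 \<in> sets borel. A0 \<subseteq> cbox a (a + (tau / (2 * sqrt (real CARD('p)))) *\<^sub>R ones) \<longrightarrow>
              measure (distr M borel (\<lambda>x. (1/2) *\<^sub>R (transpose U *v x + ones))) A0
                \<ge> c0' * measure lborel A0))"
proof -
  have c0: "c0 > 0" and tau: "tau > 0" using assms by auto
  define Kd where "Kd = measure lborel (cball (0::real^'d) (tau/2))"
  define Kp where "Kp = measure lborel (cball (0::real^'p) (tau/2))"
  have Kd: "Kd > 0" "Kp > 0" using tau by (simp_all add: Kd_def Kp_def)
  define c' where "c' = c0 * 2 ^ CARD('p) * Kd / Kp"
  have c'pos: "c' > 0" using c0 Kd by (simp add: c'_def)
  define s where "s = tau / (2 * sqrt (real CARD('p)))"
  have sq1: "sqrt (real CARD('p)) \<ge> 1" by simp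
  have spos: "s > 0" using tau sq1 by (simp add: s_def)
  have sle: "s \<le> tau/2" using tau sq1 unfolding s_def by (simp add: field_simps)
  have ssq: "sqrt (real CARD('p)) * s = tau/2" using sq1 unfolding s_def by (simp add: field_simps)
  show ?thesis
  proof (intro exI[of _ c'] conjI allI impI)
    show "c' > 0" by (rule c'pos)
    fix M :: "(real ^ 'd) measure" and U :: "real ^ 'p ^ 'd" and z :: "real ^ 'd"
    assume H: "prob_space M \<and> sets M = sets borel \<and> measure M (cball 0 1) = 1
      \<and> cball z tau \<subseteq> cball 0 1
      \<and> (\<forall>A0 \<in> sets borel. A0 \<subseteq> cball z tau \<longrightarrow> measure M A0 \<ge> c0 * measure lborel A0)
      \<and> transpose U ** U = mat 1"
    then have PS: "prob_space M" and SM: "sets M = sets borel" and Z: "cball z tau \<subseteq> cball 0 1"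
      and LB: "\<And>A0. A0 \<in> sets borel \<Longrightarrow> A0 \<subseteq> cball z tau \<Longrightarrow> measure M A0 \<ge> c0 * measure lborel A0"
      and UU: "transpose U ** U = mat 1" by auto
    define u where "u = transpose U *v z"
    define a where "a = (1/2) *\<^sub>R (u + ones) - (s/2) *\<^sub>R ones"
    have nz: "norm z + tau \<le> 1" using Z tau by (simp add: cball_subset_cball_iff dist_norm)
    have "(norm z)\<^sup>2 = (norm (z - U *v (transpose U *v z)))\<^sup>2 + (norm u)\<^sup>2"
      unfolding u_def by (rule pyth_U[OF UU])
    then have "(norm u)\<^sup>2 \<le> (norm z)\<^sup>2" by simp
    then have nu: "norm u \<le> norm z" using power2_le_imp_le norm_ge_zero by blast
    have ui: "\<bar>u $ i\<bar> \<le> 1 - tau" for i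
      using component_le_norm_cart[of u i] nu nz by linarith
    have ai: "a $ i = (u $ i + 1) / 2 - s / 2" for i
      by (simp add: a_def ones_def)
    have onesi: "ones $ i = (1::real)" for i by (simp add: ones_def)
    have cube: "cbox a (a + s *\<^sub>R ones) \<subseteq> cbox 0 ones"
    proof
      fix x assume "x \<in> cbox a (a + s *\<^sub>R ones)"
      then have h: "a $ i \<le> x $ i \<and> x $ i \<le> a $ i + s" for i
        by (simp add: mem_box_cart onesi)
      show "x \<in> cbox 0 ones"
        unfolding mem_box_cart
      proof (intro allI)
        fix i
        have "a $ i \<le> x $ i" "x $ i \<le> a $ i + s" using h[of i] by auto
        moreover have "\<bar>u $ i\<bar> \<le> 1 - tau" by (rule ui)
        moreover have "a $ i = (u $ i + 1) / 2 - s / 2" by (rule ai)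
        ultimately have "0 \<le> x $ i \<and> x $ i \<le> 1"
          using sle spos by (auto simp add: abs_le_iff field_simps)
        then show "0 $ i \<le> x $ i \<and> x $ i \<le> ones $ i" by (simp add: onesi)
      qed
    qed
    have main: "\<forall>A0 \<in> sets borel. A0 \<subseteq> cbox a (a + s *\<^sub>R ones) \<longrightarrow>
              measure (distr M borel (\<lambda>x. (1/2) *\<^sub>R (transpose U *v x + ones))) A0
                \<ge> c' * measure lborel A0"
    proof (intro ballI impI)
      fix A0 :: "(real^'p) set" assume A0: "A0 \<in> sets borel" and A0s: "A0 \<subseteq> cbox a (a + s *\<^sub>R ones)"
      define Hf where "Hf = (\<lambda>b::real^'p. (1/2) *\<^sub>R ones + (1/2) *\<^sub>R b)"
      define B where "B = Hf -` A0"
      have mHf: "Hf \<in> borel_measurable borel" unfolding Hf_def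
        by (intro borel_measurable_continuous_onI continuous_intros)
      have Bb: "B \<in> sets borel" unfolding B_def using measurable_sets[OF mHf A0] by simp
      have Bsub: "norm (y - transpose U *v z) \<le> tau/2" if y: "y \<in> B" for y
      proof -
        have "Hf y \<in> cbox a (a + s *\<^sub>R ones)" using y A0s by (auto simp: B_def)
        then have h2: "a $ i \<le> Hf y $ i \<and> Hf y $ i \<le> a $ i + s" for i
          by (simp add: mem_box_cart onesi)
        have "\<bar>(y - u) $ i\<bar> \<le> s" for i
          using h2[of i] by (auto simp: ai Hf_def onesi abs_le_iff field_simps)
        then have "norm (y - u) \<le> sqrt (real CARD('p)) * s" by (rule norm_le_comp)
        then show ?thesis using ssq by (simp add: u_def)
      qed
      define S where "S = cball z tau \<inter> (\<lambda>x. transpose U *v x) -` B"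
      have KM: "Kd * measure lborel B \<le> measure lborel S * Kp"
        using key_measure[OF UU tau Bb Bsub] by (simp add: Kd_def Kp_def S_def)
      have "emeasure lborel A0 = ennreal ((1/2)^DIM(real^'p)) * emeasure lborel B"
        unfolding B_def Hf_def by (rule scale_meas[OF A0])
      then have mA0: "measure lborel A0 = (1/2)^CARD('p) * measure lborel B"
        by (simp add: measure_def enn2real_mult)
      have mS: "measure lborel S \<ge> 2 ^ CARD('p) * Kd / Kp * measure lborel A0"
      proof -
        have "2 ^ CARD('p) * Kd / Kp * measure lborel A0 = Kd * measure lborel B / Kp"
          by (simp add: mA0 power_one_over)
        also have "\<dots> \<le> measure lborel S" using KM Kd by (simp add: divide_le_eq)
        finally show ?thesis .
      qed
      define F where "F = (\<lambda>x. (1/2) *\<^sub>R (transpose U *v x + ones))"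
      have mV: "(\<lambda>x. transpose U *v x) \<in> borel_measurable borel"
        by (intro borel_measurable_continuous_onI continuous_intros)
      have Sb: "S \<in> sets borel" unfolding S_def using measurable_sets[OF mV Bb]
        by (auto simp del: transpose_matrix_vector)
      have mF: "F \<in> borel_measurable borel" unfolding F_def
        by (intro borel_measurable_continuous_onI continuous_intros)
      have mFM: "F \<in> M \<rightarrow>\<^sub>M borel" using mF measurable_cong_sets[OF SM refl] by blast
      have spM: "space M = UNIV" using sets_eq_imp_space_eq[OF SM] by simp
      have SF: "S \<subseteq> F -` A0 \<inter> space M"
      proof
        fix x assume "x \<in> S"
        then have "Hf (transpose U *v x) \<in> A0" by (simp add: S_def B_def)
        moreover have "Hf (transpose U *v x) = F x" by (simp add: Hf_def F_def algebra_simps)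
        ultimately show "x \<in> F -` A0 \<inter> space M" by (simp add: spM)
      qed
      have FM: "F -` A0 \<inter> space M \<in> sets M" using measurable_sets[OF mFM A0] .
      interpret prob_space M by (rule PS)
      have "c' * measure lborel A0 = c0 * (2 ^ CARD('p) * Kd / Kp * measure lborel A0)"
        by (simp add: c'_def)
      also have "\<dots> \<le> c0 * measure lborel S" using mult_left_mono[OF mS] c0 by simp
      also have "\<dots> \<le> measure M S" using LB[OF Sb] by (simp add: S_def)
      also have "\<dots> \<le> measure M (F -` A0 \<inter> space M)"
        by (rule finite_measure_mono[OF SF FM])
      also have "\<dots> = measure (distr M borel F) A0"
        using A0 mFM by (simp add: measure_distr)
      finally show "measure (distr M borel (\<lambda>x. (1/2) *\<^sub>R (transpose U *v x + ones))) A0 \<ge> c' * measure lborel A0"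
        by (simp add: F_def)
    qed
    show "\<exists>a :: real ^ 'p.
           cbox a (a + (tau / (2 * sqrt (real CARD('p)))) *\<^sub>R ones) \<subseteq> cbox 0 ones
         \<and> (\<forall>A0 \<in> sets borel. A0 \<subseteq> cbox a (a + (tau / (2 * sqrt (real CARD('p)))) *\<^sub>R ones) \<longrightarrow>
              measure (distr M borel (\<lambda>x. (1/2) *\<^sub>R (transpose U *v x + ones))) A0
                \<ge> c' * measure lborel A0)"
      using cube main unfolding s_def by blast
  qed
qed
end
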